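(* Let $k,n\in\mathbb N$ with $k\le n$, let $\lambda\vdash n$ be a partition, let $\pi\in\mathfrak S_n$ be a permutation with $\pi(l)=l$ for all $1\le l<k$, and let $T\in\operatorname{T}(\lambda)$ be a tabloid. Set $\tilde T:=\pi\circ T$, and for each cell $x\in\lambda$ let $T_x$ and $\tilde T_x$ be the intermediate tabloids arising in the Novelli--Pak--Stoyanovskii sorting of $T$ and of $\tilde T$, respectively. Then for every $x\in\lambda$ the permutation $\pi_x\in\mathfrak S_n$ defined by $\tilde T_x=\pi_x\circ T_x$ satisfies $\pi_x(l)=l$ for all $1\le l<k$.
   Context: A partition $\lambda\vdash n$ is identified with its Young diagram $\{(i,j)\in\mathbb Z^2: i\ge1,\ 1\le j\le\lambda_i\}$ (cells in matrix coordinates, row $i$, column $j$). A tabloid of shape $\lambda$ is a bijection $T:\lambda\to\{1,\dots,n\}$; $\operatorname{T}(\lambda)$ is the set of tabloids. $\mathfrak S_n$ acts by $\sigma(T):=\sigma\circ T$. The right and bottom neighbours of $(i,j)$ are the cells $(i,j+1),(i+1,j)$ lying in $\lambda$. Order the cells by $(i,j)\prec(k,l)$ iff $j<l$, or $j=l$ and $i<k$; list them as $z_1\prec\dots\prec z_n$. Novelli--Pak--Stoyanovskii sorting of $T$: set $T_{z_n}:=T$; for $m=n-1,n-2,\dots,1$, obtain $T_{z_m}$ from $T_{z_{m+1}}$ by the following slide $\sigma_{z_m}$ at $z_m$: the entry $a$ sitting in $z_m$ is repeatedly exchanged with the smaller of the entries in its current right and bottom neighbours, as long as that smaller entry is less than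 $a$ (if $a$ is smaller than all of them, or there are none, it stops). Thus $T_{z_m}=\sigma_{z_m}\circ T_{z_{m+1}}$ where $\sigma_{z_m}$ is a cyclic permutation of entries. The output $T_{z_1}$ is a standard Young tableau. *)

theory Defs
  imports "HOL-Combinatorics.Permutations"
begin

type_synonym cell = "nat \<times> nat"

definition is_partition :: "nat list \<Rightarrow> nat \<Rightarrow> bool" where
  "is_partition lam n \<longleftrightarrow> sorted_wrt (\<ge>) lam \<and> (\<forall>a\<in>set lam. 0 < a) \<and> sum_list lam = n"

text \<open>Young diagram, cells (i,j) in matrix coordinates, 1-based: row i has lam!(i-1) cells.\<close>
definition young :: "nat list \<Rightarrow> cell set" where
  "young lam = {(i,j). 1 \<le> i \<and> i \<le> length lam \<and> 1 \<le> j \<and> j \<le> lam ! (i - 1)}"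

text \<open>Tabloids: bijections from the diagram onto 1..n (values outside the diagram are irrelevant).\<close>
definition tabloids :: "nat list \<Rightarrow> (cell \<Rightarrow> nat) set" where
  "tabloids lam = {T. bij_betw T (young lam) {1..sum_list lam}}"

lemma young_bound:
  assumes "(i,j) \<in> young lam"
  shows "i + j \<le> length lam + sum_list lam"
proof -
  from assms have i: "1 \<le> i" "i \<le> length lam" and j: "j \<le> lam ! (i - 1)"
    by (auto simp: young_def)
  have "lam ! (i - 1) \<in> set lam" using i by auto
  hence "lam ! (i - 1) \<le> sum_list lam" by (simp add: member_le_sum_list)
  with i j show ?thesis by linarith
qed

function slide :: "nat list \<Rightarrow> (cell \<Rightarrow> nat) \<Rightarrow> cell \<Rightarrow> (cell \<Rightarrow> nat)" where
  "slide lam T (i,j) =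
     (let R = (i, j+1); B = (i+1, j); Y = young lam;
          q = (if R \<in> Y \<and> B \<in> Y then (if T B < T R then B else R)
               else if R \<in> Y then R else B)
      in if q \<in> Y \<and> T q < T (i,j)
         then slide lam (T((i,j) := T q, q := T (i,j))) q
         else T)"
  by pat_completeness auto
termination
proof (relation "measure (\<lambda>(lam, T, (i,j)). Suc (length lam + sum_list lam) - (i + j))", goal_cases)
  case 1 then show ?case by simp
next
  case (2 lam T i j R B Y q)
  then have qY: "q \<in> young lam" and q: "q = (i, j+1) \<or> q = (i+1, j)" by (auto split: if_splits)
  obtain a b where ab: "q = (a,b)" by (cases q)
  have "a + b \<le> length lam + sum_list lam" using young_bound qY ab by blast
  moreover have "a + b = i + j + 1" using q ab by auto
  ultimately show ?case using ab by simp
qed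

text \<open>The cells listed in the order z_1 < ... < z_n: column by column, top to bottom.\<close>
definition cells_list :: "nat list \<Rightarrow> cell list" where
  "cells_list lam = [(i,j). j \<leftarrow> [1..<Suc (sum_list lam)], i \<leftarrow> [1..<Suc (length lam)],
                            (i,j) \<in> young lam]"

text \<open>Intermediate NPS tabloid T_x: for x = z_{p+1} (0-based position p in cells_list),
  T_x = slide at z_{p+1} applied after ... after slide at z_{n-1}, starting from T_{z_n} = T.\<close>
definition nps_tab :: "nat list \<Rightarrow> (cell \<Rightarrow> nat) \<Rightarrow> cell \<Rightarrow> (cell \<Rightarrow> nat)" where
  "nps_tab lam T x =
     (let zs = cells_list lam; p = (LEAST p. p < length zs \<and> zs ! p = x)
      in foldr (\<lambda>z T'. slide lam T' z) (drop p (butlast zs)) T)"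

end

theory Submission
  imports Defs
begin


definition nb :: "cell \<Rightarrow> cell \<Rightarrow> bool" where
  "nb y y' \<longleftrightarrow> y' = (fst y, snd y + 1) \<or> y' = (fst y + 1, snd y)"

lemma nb_neq: "nb y y' \<Longrightarrow> y \<noteq> y'"
  by (cases y) (auto simp: nb_def)

definition qsel :: "nat list \<Rightarrow> (cell \<Rightarrow> nat) \<Rightarrow> cell \<Rightarrow> cell" where
  "qsel lam S c = (let R = (fst c, snd c+1); B = (fst c+1, snd c); Y = young lam in
     if R \<in> Y \<and> B \<in> Y then (if S B < S R then B else R) else if R \<in> Y then R else B)"

declare slide.simps[simp del]

lemma slide_unf:
  "slide lam S c = (if qsel lam S c \<in> young lam \<and> S (qsel lam S c) < S c
     then slide lam (S(c := S (qsel lam S c), qsel lam S c := S c)) (qsel lam S c) else S)"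
  apply (cases c)
  apply (simp only:)
  apply (subst slide.simps)
  apply (simp add: qsel_def Let_def)
  done

lemma qsel_nb: "nb c (qsel lam S c)"
  by (auto simp: qsel_def nb_def Let_def)

lemma qsel_min: "nb c y' \<Longrightarrow> y' \<in> young lam \<Longrightarrow> qsel lam S c \<in> young lam \<and> S (qsel lam S c) \<le> S y'"
  by (auto simp: qsel_def nb_def Let_def)

definition meas :: "nat list \<Rightarrow> cell \<Rightarrow> nat" where
  "meas lam c = Suc (length lam + sum_list lam) - (fst c + snd c)"

lemma meas_dec: "q \<in> young lam \<Longrightarrow> nb c q \<Longrightarrow> meas lam q < meas lam c"
proof -
  assume q: "q \<in> young lam" "nb c q"
  obtain a b where ab: "q = (a,b)" by (cases q)
  have 1: "a + b \<le> length lam + sum_list lam" using young_bound[of a b lam] q(1) ab by simp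
  have 2: "a + b = fst c + snd c + 1" using q(2) ab unfolding nb_def by auto
  show ?thesis using 1 2 ab unfolding meas_def by simp
qed

definition eqk :: "nat \<Rightarrow> cell set \<Rightarrow> (cell \<Rightarrow> nat) \<Rightarrow> (cell \<Rightarrow> nat) \<Rightarrow> bool" where
  "eqk k Y S S' \<longleftrightarrow> (\<forall>y\<in>Y. (S y < k \<longleftrightarrow> S' y < k) \<and> (S y < k \<longrightarrow> S' y = S y))"

lemma eqkD1: "eqk k Y S S' \<Longrightarrow> y \<in> Y \<Longrightarrow> S y < k \<Longrightarrow> S' y = S y"
  unfolding eqk_def by blast

lemma eqkD2: "eqk k Y S S' \<Longrightarrow> y \<in> Y \<Longrightarrow> (S' y < k) = (S y < k)"
  unfolding eqk_def by blast

lemma eqkI: "(\<And>y. y \<in> Y \<Longrightarrow> (S' y < k) = (S y < k)) \<Longrightarrow> (\<And>y. y \<in> Y \<Longrightarrow> S y < k \<Longrightarrow> S' y = S y)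
   \<Longrightarrow> eqk k Y S S'"
  unfolding eqk_def by blast

lemma eqk_sym: "eqk k Y S S' \<Longrightarrow> eqk k Y S' S"
  by (rule eqkI) (metis eqkD2, metis eqkD1 eqkD2)

lemma eqk_swap:
  assumes e: "eqk k Y S S'" and c: "c \<in> Y" and q: "q \<in> Y"
  shows "eqk k Y (S(c := S q, q := S c)) (S'(c := S' q, q := S' c))"
proof -
  have "\<exists>z\<in>Y. (S(c := S q, q := S c)) y = S z \<and> (S'(c := S' q, q := S' c)) y = S' z" if "y \<in> Y" for y
  proof (cases "y = q")
    case True then show ?thesis using c by auto
  next
    case False then show ?thesis using q that by (cases "y = c") auto
  qed
  then show ?thesis
    by (intro eqkI) (metis eqkD2[OF e], metis eqkD1[OF e])
qed

definition DS :: "nat \<Rightarrow> cell set \<Rightarrow> (cell \<Rightarrow> nat) \<Rightarrow> bool" where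
  "DS k Rg S \<longleftrightarrow> (\<forall>y\<in>Rg. \<forall>y'\<in>Rg. nb y y' \<longrightarrow> S y' < k \<longrightarrow> S y < k)"

definition DSx :: "nat \<Rightarrow> cell set \<Rightarrow> cell \<Rightarrow> (cell \<Rightarrow> nat) \<Rightarrow> bool" where
  "DSx k Rg c S \<longleftrightarrow> (\<forall>y\<in>Rg. y \<noteq> c \<longrightarrow> (\<forall>y'\<in>Rg. nb y y' \<longrightarrow> S y' < k \<longrightarrow> S y < k))"

definition predsmall :: "nat \<Rightarrow> cell set \<Rightarrow> cell \<Rightarrow> (cell \<Rightarrow> nat) \<Rightarrow> bool" where
  "predsmall k Rg c S \<longleftrightarrow> (\<forall>y\<in>Rg. nb y c \<longrightarrow> S y < k)"

definition closedR :: "nat list \<Rightarrow> cell set \<Rightarrow> bool" where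
  "closedR lam Rg \<longleftrightarrow> Rg \<subseteq> young lam \<and> (\<forall>y\<in>Rg. \<forall>y'\<in>young lam. nb y y' \<longrightarrow> y' \<in> Rg)"

lemma DS_cong: "(\<forall>y\<in>Rg. S y < k \<longleftrightarrow> S2 y < k) \<Longrightarrow> DS k Rg S \<Longrightarrow> DS k Rg S2"
  unfolding DS_def by blast

lemma slide_small_set:
  "S c < k \<Longrightarrow> (\<forall>y. slide lam S c y < k \<longleftrightarrow> S y < k)"
proof (induction "meas lam c" arbitrary: S c rule: less_induct)
  case less
  let ?q = "qsel lam S c"
  show ?case
  proof (cases "?q \<in> young lam \<and> S ?q < S c")
    case True
    let ?S1 = "S(c := S ?q, ?q := S c)"
    have "meas lam ?q < meas lam c" using True meas_dec qsel_nb by blast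
    moreover have "?S1 ?q < k" using less.prems by simp
    ultimately have "\<forall>y. slide lam ?S1 ?q y < k \<longleftrightarrow> ?S1 y < k" by (rule less.hyps)
    moreover have "\<forall>y. ?S1 y < k \<longleftrightarrow> S y < k" using True less.prems by auto
    moreover have "slide lam S c = slide lam ?S1 ?q" by (subst slide_unf, rule if_P[OF True])
    ultimately show ?thesis by simp
  next
    case False
    have "slide lam S c = S" by (subst slide_unf, rule if_not_P[OF False])
    then show ?thesis by simp
  qed
qed

lemma swap_image: "c \<in> Y \<Longrightarrow> q \<in> Y \<Longrightarrow> (S(c := S q, q := S c)) ` Y = S ` Y"
proof -
  assume c: "c \<in> Y" and q: "q \<in> Y"
  have e: "S(c := S q, q := S c) = S \<circ> transpose c q"
    by (rule ext) (simp add: transpose_def)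
  have "transpose c q ` Y = Y" using permutes_image[OF permutes_swap_id[OF c q]] .
  then show ?thesis unfolding e image_comp[symmetric] by simp
qed

lemma slide_image:
  "c \<in> young lam \<Longrightarrow> slide lam S c ` young lam = S ` young lam"
proof (induction "meas lam c" arbitrary: S c rule: less_induct)
  case less
  let ?q = "qsel lam S c"
  show ?case
  proof (cases "?q \<in> young lam \<and> S ?q < S c")
    case True
    let ?S1 = "S(c := S ?q, ?q := S c)"
    have m: "meas lam ?q < meas lam c" using True meas_dec qsel_nb by blast
    have "slide lam ?S1 ?q ` young lam = ?S1 ` young lam" by (rule less.hyps[OF m]) (use True in blast)
    moreover have "?S1 ` young lam = S ` young lam"
      using True less.prems by (intro swap_image) auto
    moreover have "slide lam S c = slide lam ?S1 ?q" by (subst slide_unf, rule if_P[OF True])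
    ultimately show ?thesis by simp
  next
    case False
    have "slide lam S c = S" by (subst slide_unf, rule if_not_P[OF False])
    then show ?thesis by simp
  qed
qed

lemma qsel_same:
  assumes e: "eqk k (young lam) S S'" and y: "y' \<in> young lam" "nb c y'" "S y' < k"
  shows "qsel lam S' c = qsel lam S c"
proof -
  let ?R = "(fst c, snd c+1)" and ?B = "(fst c+1, snd c)"
  have yy: "y' = ?R \<or> y' = ?B" using y by (auto simp: nb_def)
  show ?thesis
  proof (cases "?R \<in> young lam \<and> ?B \<in> young lam")
    case True
    have b: "(S' ?R < k) = (S ?R < k)" "(S' ?B < k) = (S ?B < k)" using eqkD2[OF e] True by auto
    have v: "S ?R < k \<Longrightarrow> S' ?R = S ?R" "S ?B < k \<Longrightarrow> S' ?B = S ?B" using eqkD1[OF e] True by auto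
    have sm: "S ?R < k \<or> S ?B < k" using yy y by auto
    have "(S' ?B < S' ?R) = (S ?B < S ?R)"
      using b v sm by (cases "S ?R < k"; cases "S ?B < k") auto
    then show ?thesis using True by (simp add: qsel_def Let_def)
  next
    case False
    then show ?thesis by (simp add: qsel_def Let_def)
  qed
qed

lemma slide_small:
  "c \<in> young lam \<Longrightarrow> S c < k \<Longrightarrow> eqk k (young lam) S S' \<Longrightarrow>
   eqk k (young lam) (slide lam S c) (slide lam S' c)"
proof (induction "meas lam c" arbitrary: S S' c rule: less_induct)
  case less
  let ?q = "qsel lam S c" and ?q' = "qsel lam S' c"
  have cc: "S' c = S c" using less.prems eqkD1 by blast
  show ?case
  proof (cases "?q \<in> young lam \<and> S ?q < S c")
    case True
    have qq: "?q' = ?q" using qsel_same[OF less.prems(3), of ?q c] True less.prems(2) qsel_nb by auto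
    have sq: "S' ?q = S ?q" using less.prems True eqkD1 by auto
    have T': "?q' \<in> young lam \<and> S' ?q' < S' c" using qq sq cc True by simp
    let ?S1 = "S(c := S ?q, ?q := S c)" and ?S1' = "S'(c := S' ?q, ?q := S' c)"
    have h1: "meas lam ?q < meas lam c" using True meas_dec qsel_nb by blast
    have h2: "eqk k (young lam) ?S1 ?S1'" using eqk_swap less.prems True by blast
    have h3: "?S1 ?q < k" using less.prems by simp
    have h4: "?q \<in> young lam" using True by blast
    have "eqk k (young lam) (slide lam ?S1 ?q) (slide lam ?S1' ?q)"
      by (rule less.hyps[OF h1 h4 h3 h2])
    moreover have "slide lam S c = slide lam ?S1 ?q" by (subst slide_unf, rule if_P[OF True])
    moreover have "slide lam S' c = slide lam ?S1' ?q"
      by (subst slide_unf, subst if_P[OF T']) (simp add: qq)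
    ultimately show ?thesis by simp
  next
    case False
    have F': "\<not> (?q' \<in> young lam \<and> S' ?q' < S' c)"
    proof
      assume T': "?q' \<in> young lam \<and> S' ?q' < S' c"
      have e': "eqk k (young lam) S' S" using eqk_sym less.prems by blast
      have "S' ?q' < k" using T' cc less.prems by simp
      then have qq: "?q = ?q'" using qsel_same[OF e', of ?q' c] T' qsel_nb by auto
      have "S ?q' = S' ?q'" using e' T' \<open>S' ?q' < k\<close> eqkD1 by blast
      then show False using False T' qq cc by simp
    qed
    have "slide lam S c = S" by (subst slide_unf, rule if_not_P[OF False])
    moreover have "slide lam S' c = S'" by (subst slide_unf, rule if_not_P[OF F'])
    ultimately show ?thesis using less.prems by simp
  qed
qed

lemma slide_large:
  "closedR lam Rg \<Longrightarrow> c \<in> Rg \<Longrightarrow> \<not> S c < k \<Longrightarrow> DS k Rg S \<Longrightarrow>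
   (\<forall>y. S y < k \<longrightarrow> slide lam S c y = S y) \<and> (\<forall>y. slide lam S c y < k \<longleftrightarrow> S y < k)"
proof (induction "meas lam c" arbitrary: S c rule: less_induct)
  case less
  let ?q = "qsel lam S c"
  show ?case
  proof (cases "?q \<in> young lam \<and> S ?q < S c")
    case True
    let ?S1 = "S(c := S ?q, ?q := S c)"
    have qR: "?q \<in> Rg" using less.prems(1,2) True qsel_nb unfolding closedR_def by blast
    have ql: "\<not> S ?q < k" using less.prems(2,3,4) qR qsel_nb unfolding DS_def by blast
    have h1: "meas lam ?q < meas lam c" using True meas_dec qsel_nb by blast
    have h2: "\<not> ?S1 ?q < k" using less.prems by simp
    have sm: "\<forall>y. ?S1 y < k \<longleftrightarrow> S y < k" using ql less.prems(3) by auto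
    have h3: "DS k Rg ?S1" using DS_cong[OF _ less.prems(4)] sm by blast
    have IH: "(\<forall>y. ?S1 y < k \<longrightarrow> slide lam ?S1 ?q y = ?S1 y) \<and> (\<forall>y. slide lam ?S1 ?q y < k \<longleftrightarrow> ?S1 y < k)"
      by (rule less.hyps[OF h1 less.prems(1) qR h2 h3])
    have sv: "\<forall>y. S y < k \<longrightarrow> ?S1 y = S y" using ql less.prems(3) by auto
    have "slide lam S c = slide lam ?S1 ?q" by (subst slide_unf, rule if_P[OF True])
    then show ?thesis using IH sm sv by metis
  next
    case False
    have "slide lam S c = S" by (subst slide_unf, rule if_not_P[OF False])
    then show ?thesis by simp
  qed
qed

lemma slide_main:
  "closedR lam Rg \<Longrightarrow> c \<in> Rg \<Longrightarrow> DSx k Rg c S \<Longrightarrow> predsmall k Rg c S \<Longrightarrow>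
   eqk k (young lam) S S' \<Longrightarrow>
   eqk k (young lam) (slide lam S c) (slide lam S' c) \<and> DS k Rg (slide lam S c)"
proof (induction "meas lam c" arbitrary: S S' c rule: less_induct)
  case less
  have RY: "Rg \<subseteq> young lam" using less.prems(1) unfolding closedR_def by blast
  have cY: "c \<in> young lam" using RY less.prems(2) by blast
  show ?case
  proof (cases "S c < k")
    case True
    have "DS k Rg S" using less.prems(3) True unfolding DSx_def DS_def by metis
    moreover have "\<forall>y. slide lam S c y < k \<longleftrightarrow> S y < k" using slide_small_set True by blast
    ultimately have "DS k Rg (slide lam S c)" using DS_cong by blast
    then show ?thesis using slide_small cY True less.prems(5) by blast
  next
    case large: False
    have large': "\<not> S' c < k" using large eqkD2[OF less.prems(5) cY] by blast
    show ?thesis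
    proof (cases "\<exists>y'\<in>young lam. nb c y' \<and> S y' < k")
      case True
      then obtain y' where y': "y' \<in> young lam" "nb c y'" "S y' < k" by blast
      let ?q = "qsel lam S c"
      have qY: "?q \<in> young lam" and qle: "S ?q \<le> S y'" using qsel_min y' by blast+
      have qs: "S ?q < k" using qle y' by simp
      have qq: "qsel lam S' c = ?q" using qsel_same[OF less.prems(5) y'] .
      have qs': "S' ?q = S ?q" using eqkD1[OF less.prems(5) qY qs] .
      have T: "?q \<in> young lam \<and> S ?q < S c" using qY qs large by simp
      have T': "qsel lam S' c \<in> young lam \<and> S' (qsel lam S' c) < S' c"
        using qq qs' qY qs large' by simp
      have qR: "?q \<in> Rg" using less.prems(1,2) qY qsel_nb unfolding closedR_def by blast
      let ?S1 = "S(c := S ?q, ?q := S c)" and ?S1' = "S'(c := S' ?q, ?q := S' c)"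
      have cq: "c \<noteq> ?q" using qsel_nb[of c lam S] by (cases c) (auto simp: nb_def)
      have h1: "meas lam ?q < meas lam c" using qY meas_dec qsel_nb by blast
      have h2: "eqk k (young lam) ?S1 ?S1'" using eqk_swap less.prems(5) cY qY by blast
      have h3: "DSx k Rg ?q ?S1"
        unfolding DSx_def
      proof (intro ballI impI)
        fix y y' assume yR: "y \<in> Rg" and yq: "y \<noteq> ?q" and y'R: "y' \<in> Rg"
          and nyy: "nb y y'" and sm: "?S1 y' < k"
        show "?S1 y < k"
        proof (cases "y = c")
          case True then show ?thesis using cq qs by simp
        next
          case yc: False
          have "y' \<noteq> ?q" using sm large cq by auto
          show ?thesis
          proof (cases "y' = c")
            case True
            then show ?thesis using less.prems(4) yR nyy yc yq unfolding predsmall_def by auto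
          next
            case False
            then have "S y' < k" using sm \<open>y' \<noteq> ?q\<close> by simp
            then show ?thesis using less.prems(3) yR yc y'R nyy yq unfolding DSx_def by auto
          qed
        qed
      qed
      have h4: "predsmall k Rg ?q ?S1"
        unfolding predsmall_def
      proof (intro ballI impI)
        fix y assume yR: "y \<in> Rg" and nyq: "nb y ?q"
        have yq: "y \<noteq> ?q" using nb_neq[OF nyq] .
        show "?S1 y < k"
        proof (cases "y = c")
          case True then show ?thesis using cq qs by simp
        next
          case False
          then have "S y < k" using less.prems(3) yR qR nyq qs unfolding DSx_def by blast
          then show ?thesis using False yq by simp
        qed
      qed
      have IH: "eqk k (young lam) (slide lam ?S1 ?q) (slide lam ?S1' ?q) \<and> DS k Rg (slide lam ?S1 ?q)"
        by (rule less.hyps[OF h1 less.prems(1) qR h3 h4 h2])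
      have "slide lam S c = slide lam ?S1 ?q" by (subst slide_unf, rule if_P[OF T])
      moreover have "slide lam S' c = slide lam ?S1' ?q"
        by (subst slide_unf, subst if_P[OF T']) (simp add: qq)
      ultimately show ?thesis using IH by simp
    next
      case False
      have DS1: "DS k Rg S" unfolding DS_def
      proof (intro ballI impI)
        fix y y' assume "y \<in> Rg" "y' \<in> Rg" "nb y y'" "S y' < k"
        then show "S y < k" using less.prems(3) False RY unfolding DSx_def by (cases "y = c") auto
      qed
      have sms: "\<forall>y\<in>Rg. S y < k \<longleftrightarrow> S' y < k" using eqkD2[OF less.prems(5)] RY by blast
      have DS2: "DS k Rg S'" using DS_cong[OF sms DS1] .
      have A: "(\<forall>y. S y < k \<longrightarrow> slide lam S c y = S y) \<and> (\<forall>y. slide lam S c y < k \<longleftrightarrow> S y < k)"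
        using slide_large less.prems(1,2) large DS1 by blast
      have B: "(\<forall>y. S' y < k \<longrightarrow> slide lam S' c y = S' y) \<and> (\<forall>y. slide lam S' c y < k \<longleftrightarrow> S' y < k)"
        using slide_large less.prems(1,2) large' DS2 by blast
      have "eqk k (young lam) (slide lam S c) (slide lam S' c)"
      proof (rule eqkI)
        fix y assume y: "y \<in> young lam"
        show "(slide lam S' c y < k) = (slide lam S c y < k)"
          using A B eqkD2[OF less.prems(5) y] by blast
        assume "slide lam S c y < k"
        then have "S y < k" using A by blast
        then show "slide lam S' c y = slide lam S c y"
          using A B eqkD1[OF less.prems(5) y] eqkD2[OF less.prems(5) y] by metis
      qed
      moreover have "DS k Rg (slide lam S c)" using DS_cong[OF _ DS1] A by blast
      ultimately show ?thesis by blast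
    qed
  qed
qed


definition rel :: "cell \<Rightarrow> cell \<Rightarrow> bool" where
  "rel a b \<longleftrightarrow> snd a < snd b \<or> (snd a = snd b \<and> fst a < fst b)"

lemma inner_sorted: "sorted_wrt (<) ys \<Longrightarrow> sorted_wrt rel [(i,j). i \<leftarrow> ys, P i j]"
  by (induction ys) (auto simp: sorted_wrt_append rel_def)

lemma outer_sorted: "sorted_wrt (<) xs \<Longrightarrow> sorted_wrt (<) ys \<Longrightarrow>
   sorted_wrt rel [(i,j). j \<leftarrow> xs, i \<leftarrow> ys, P i j]"
proof (induction xs)
  case Nil then show ?case by simp
next
  case (Cons x xs)
  have "sorted_wrt rel [(i,x). i \<leftarrow> ys, P i x]" using inner_sorted Cons.prems by blast
  then show ?case using Cons by (simp add: sorted_wrt_append) (auto simp: rel_def)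
qed

lemma cells_sorted: "sorted_wrt rel (cells_list lam)"
  unfolding cells_list_def by (rule outer_sorted) (rule sorted_wrt_upt)+

lemma cells_set: "set (cells_list lam) = young lam"
proof
  show "set (cells_list lam) \<subseteq> young lam" unfolding cells_list_def by auto
next
  show "young lam \<subseteq> set (cells_list lam)"
  proof
    fix y assume y: "y \<in> young lam"
    obtain i j where ij: "y = (i,j)" by (cases y)
    have "j \<le> sum_list lam" using young_bound[of i j lam] y ij unfolding young_def
      by (auto intro: order.trans[OF _ member_le_sum_list])
    then show "y \<in> set (cells_list lam)" using y ij unfolding cells_list_def young_def by auto
  qed
qed
lemma rel_irrefl: "\<not> rel a a" by (simp add: rel_def)
lemma rel_asym: "rel a b \<Longrightarrow> \<not> rel b a" by (auto simp: rel_def)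
lemma nb_rel: "nb y y' \<Longrightarrow> rel y y'" by (auto simp: nb_def rel_def)

lemma idx_lt:
  assumes s: "sorted_wrt rel zs" and ab: "a < length zs" "b < length zs" and r: "rel (zs!a) (zs!b)"
  shows "a < b"
proof (rule ccontr)
  assume "\<not> a < b"
  then consider "a = b" | "b < a" by linarith
  then show False
  proof cases
    case 1 then show ?thesis using r rel_irrefl by simp
  next
    case 2
    then have "rel (zs!b) (zs!a)" using s ab sorted_wrt_iff_nth_less by blast
    then show ?thesis using r rel_asym by blast
  qed
qed

lemma idx_inj:
  assumes s: "sorted_wrt rel zs" and ab: "a < length zs" "b < length zs" and e: "zs!a = zs!b"
  shows "a = b"
proof (rule ccontr)
  assume "a \<noteq> b"
  then consider "a < b" | "b < a" by linarith
  then show False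
  proof cases
    case 1 then have "rel (zs!a) (zs!b)" using s ab sorted_wrt_iff_nth_less by blast
    then show ?thesis using e rel_irrefl by simp
  next
    case 2 then have "rel (zs!b) (zs!a)" using s ab sorted_wrt_iff_nth_less by blast
    then show ?thesis using e rel_irrefl by simp
  qed
qed

lemma in_drop_iff: "y \<in> set (drop m zs) \<longleftrightarrow> (\<exists>a. m \<le> a \<and> a < length zs \<and> zs!a = y)"
proof
  assume "y \<in> set (drop m zs)"
  then obtain i where i: "i < length (drop m zs)" "drop m zs ! i = y" by (auto simp: in_set_conv_nth)
  then show "\<exists>a. m \<le> a \<and> a < length zs \<and> zs!a = y"
    by (intro exI[of _ "m + i"]) auto
next
  assume "\<exists>a. m \<le> a \<and> a < length zs \<and> zs!a = y"
  then obtain a where a: "m \<le> a" "a < length zs" "zs!a = y" by blast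
  then have "drop m zs ! (a - m) = y" "a - m < length (drop m zs)" by auto
  then show "y \<in> set (drop m zs)" by (metis nth_mem)
qed

definition FF :: "nat list \<Rightarrow> (cell \<Rightarrow> nat) \<Rightarrow> nat \<Rightarrow> (cell \<Rightarrow> nat)" where
  "FF lam S m = foldr (\<lambda>z T'. slide lam T' z) (drop m (butlast (cells_list lam))) S"

lemma FF_step: "m < length (cells_list lam) - 1 \<Longrightarrow>
  FF lam S m = slide lam (FF lam S (Suc m)) (cells_list lam ! m)"
proof -
  assume m: "m < length (cells_list lam) - 1"
  then have "drop m (butlast (cells_list lam)) = butlast (cells_list lam) ! m # drop (Suc m) (butlast (cells_list lam))"
    by (simp add: Cons_nth_drop_Suc)
  moreover have "butlast (cells_list lam) ! m = cells_list lam ! m" using m by (simp add: nth_butlast)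
  ultimately show ?thesis unfolding FF_def by simp
qed

lemma FF_last: "FF lam S (length (cells_list lam) - 1) = S"
  unfolding FF_def by simp

lemma down_ind:
  assumes "m < N" "P (N - 1)" "\<And>m. m < N - 1 \<Longrightarrow> P (Suc m) \<Longrightarrow> P m"
  shows "P m"
proof -
  have "\<forall>m. N - 1 - m = d \<longrightarrow> m < N \<longrightarrow> P m" for d
  proof (induction d)
    case 0
    show ?case
    proof (intro allI impI)
      fix m assume "N - 1 - m = 0" "m < N"
      then have "m = N - 1" by linarith
      then show "P m" using assms(2) by simp
    qed
  next
    case (Suc d)
    show ?case
    proof (intro allI impI)
      fix m assume h: "N - 1 - m = Suc d" "m < N"
      then have "N - 1 - Suc m = d" "Suc m < N" by arith+
      then have "P (Suc m)" using Suc.IH by blast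
      moreover have "m < N - 1" using h by arith
      ultimately show "P m" using assms(3) by blast
    qed
  qed
  then show ?thesis using assms(1) by blast
qed

lemma FF_image:
  assumes "m < length (cells_list lam)"
  shows "FF lam S m ` young lam = S ` young lam"
proof (rule down_ind[where P = "\<lambda>m. FF lam S m ` young lam = S ` young lam", OF assms])
  show "FF lam S (length (cells_list lam) - 1) ` young lam = S ` young lam" unfolding FF_last ..
next
  fix m assume m: "m < length (cells_list lam) - 1" and IH: "FF lam S (Suc m) ` young lam = S ` young lam"
  have "m < length (cells_list lam)" using m by simp
  then have "cells_list lam ! m \<in> set (cells_list lam)" by (rule nth_mem)
  then have "cells_list lam ! m \<in> young lam" by (simp only: cells_set)
  then show "FF lam S m ` young lam = S ` young lam" using FF_step[OF m] slide_image IH by simp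
qed

lemma FF_eqk:
  assumes m: "m < length (cells_list lam)"
    and e0: "eqk k (young lam) S S'"
  shows "eqk k (young lam) (FF lam S m) (FF lam S' m) \<and> DS k (set (drop m (cells_list lam))) (FF lam S m)"
proof (rule down_ind[where P = "\<lambda>m. eqk k (young lam) (FF lam S m) (FF lam S' m) \<and>
      DS k (set (drop m (cells_list lam))) (FF lam S m)", OF m])
  let ?zs = "cells_list lam" and ?N = "length (cells_list lam)"
  have s: "sorted_wrt rel ?zs" by (rule cells_sorted)
  show "eqk k (young lam) (FF lam S (?N - 1)) (FF lam S' (?N - 1)) \<and> DS k (set (drop (?N - 1) ?zs)) (FF lam S (?N - 1))"
  proof
    show "eqk k (young lam) (FF lam S (?N - 1)) (FF lam S' (?N - 1))" unfolding FF_last by (rule e0)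
    show "DS k (set (drop (?N - 1) ?zs)) (FF lam S (?N - 1))"
      unfolding DS_def
    proof (intro ballI impI)
      fix y y' assume y: "y \<in> set (drop (?N - 1) ?zs)" and y': "y' \<in> set (drop (?N - 1) ?zs)" and n: "nb y y'"
      obtain a where a: "?N - 1 \<le> a" "a < ?N" "?zs!a = y" using y unfolding in_drop_iff by blast
      obtain b where b: "?N - 1 \<le> b" "b < ?N" "?zs!b = y'" using y' unfolding in_drop_iff by blast
      have "a = b" using a b by linarith
      then have False using a b nb_neq[OF n] by simp
      then show "FF lam S (?N - 1) y < k" ..
    qed
  qed
next
  let ?zs = "cells_list lam" and ?N = "length (cells_list lam)"
  have s: "sorted_wrt rel ?zs" by (rule cells_sorted)
  fix m assume m: "m < ?N - 1"
    and IH: "eqk k (young lam) (FF lam S (Suc m)) (FF lam S' (Suc m)) \<and> DS k (set (drop (Suc m) ?zs)) (FF lam S (Suc m))"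
  let ?Rg = "set (drop m ?zs)" and ?c = "?zs ! m"
  have idx: "\<And>y. y \<in> young lam \<Longrightarrow> \<exists>a<?N. ?zs!a = y"
  proof -
    fix y assume "y \<in> young lam"
    then have "y \<in> set ?zs" by (simp only: cells_set)
    then show "\<exists>a<?N. ?zs!a = y" by (simp add: in_set_conv_nth)
  qed
  have cl: "closedR lam ?Rg"
    unfolding closedR_def
  proof (intro conjI ballI impI)
    show "?Rg \<subseteq> young lam"
    proof
      fix y assume "y \<in> ?Rg"
      then have "y \<in> set ?zs" by (rule in_set_dropD)
      then show "y \<in> young lam" by (simp only: cells_set)
    qed
  next
    fix y y' assume y: "y \<in> ?Rg" and y': "y' \<in> young lam" and n: "nb y y'"
    obtain a where a: "m \<le> a" "a < ?N" "?zs!a = y" using y unfolding in_drop_iff by blast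
    obtain b where b: "b < ?N" "?zs!b = y'" using idx[OF y'] by blast
    have "a < b" using idx_lt[OF s a(2) b(1)] nb_rel[OF n] a b by simp
    then show "y' \<in> ?Rg" unfolding in_drop_iff using a b by (intro exI[of _ b]) auto
  qed
  have cR: "?c \<in> ?Rg" unfolding in_drop_iff using m by (intro exI[of _ m]) auto
  have dsx: "DSx k ?Rg ?c (FF lam S (Suc m))"
    unfolding DSx_def
  proof (intro ballI impI)
    fix y y' assume y: "y \<in> ?Rg" and yc: "y \<noteq> ?c" and y': "y' \<in> ?Rg" and n: "nb y y'"
      and sm: "FF lam S (Suc m) y' < k"
    obtain a where a: "m \<le> a" "a < ?N" "?zs!a = y" using y unfolding in_drop_iff by blast
    obtain b where b: "m \<le> b" "b < ?N" "?zs!b = y'" using y' unfolding in_drop_iff by blast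
    have "a \<noteq> m" using a yc by blast
    then have a1: "Suc m \<le> a" using a by simp
    have "a < b" using idx_lt[OF s a(2) b(2)] nb_rel[OF n] a b by simp
    have "y \<in> set (drop (Suc m) ?zs)"
      unfolding in_drop_iff using a b a1 by (intro exI[of _ a]) auto
    moreover have "y' \<in> set (drop (Suc m) ?zs)"
      unfolding in_drop_iff using a b a1 \<open>a < b\<close> by (intro exI[of _ b]) auto
    ultimately show "FF lam S (Suc m) y < k" using IH n sm unfolding DS_def by blast
  qed
  have ps: "predsmall k ?Rg ?c (FF lam S (Suc m))"
    unfolding predsmall_def
  proof (intro ballI impI)
    fix y assume y: "y \<in> ?Rg" and n: "nb y ?c"
    obtain a where a: "m \<le> a" "a < ?N" "?zs!a = y" using y unfolding in_drop_iff by blast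
    have "m < ?N" using m by simp
    have "a < m" using idx_lt[OF s a(2) \<open>m < ?N\<close>] nb_rel[OF n] a by simp
    then show "FF lam S (Suc m) y < k" using a by simp
  qed
  have "eqk k (young lam) (slide lam (FF lam S (Suc m)) ?c) (slide lam (FF lam S' (Suc m)) ?c) \<and>
        DS k ?Rg (slide lam (FF lam S (Suc m)) ?c)"
    using slide_main[OF cl cR dsx ps] IH by blast
  then show "eqk k (young lam) (FF lam S m) (FF lam S' m) \<and> DS k ?Rg (FF lam S m)"
    using FF_step[OF m, of S] FF_step[OF m, of S'] by simp
qed

theorem lemma1:
  fixes k n :: nat and lam :: "nat list" and \<pi> :: "nat \<Rightarrow> nat" and T :: "cell \<Rightarrow> nat"
  assumes "k \<le> n"
    and "is_partition lam n"
    and "\<pi> permutes {1..n}"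
    and "\<forall>l. 1 \<le> l \<and> l < k \<longrightarrow> \<pi> l = l"
    and "T \<in> tabloids lam"
  shows "\<forall>x\<in>young lam. \<forall>\<sigma>. (\<sigma> permutes {1..n} \<and>
            (\<forall>y\<in>young lam. nps_tab lam (\<pi> \<circ> T) x y = \<sigma> (nps_tab lam T x y)))
          \<longrightarrow> (\<forall>l. 1 \<le> l \<and> l < k \<longrightarrow> \<sigma> l = l)"
proof (intro ballI allI impI)
  fix x \<sigma> l
  assume x: "x \<in> young lam"
    and h: "\<sigma> permutes {1..n} \<and> (\<forall>y\<in>young lam. nps_tab lam (\<pi> \<circ> T) x y = \<sigma> (nps_tab lam T x y))"
    and l: "1 \<le> l \<and> l < k"
  let ?zs = "cells_list lam" and ?Y = "young lam"
  have sn: "sum_list lam = n" using assms(2) unfolding is_partition_def by blast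
  have TY: "T ` ?Y = {1..n}" using assms(5) sn unfolding tabloids_def bij_betw_def by simp
  have "x \<in> set ?zs" using x by (simp only: cells_set)
  then have ex: "\<exists>p. p < length ?zs \<and> ?zs ! p = x" by (simp add: in_set_conv_nth)
  define p where "p = (LEAST p. p < length ?zs \<and> ?zs ! p = x)"
  have p: "p < length ?zs" unfolding p_def using LeastI_ex[OF ex] by blast
  have nT: "\<And>S. nps_tab lam S x = FF lam S p" unfolding nps_tab_def FF_def p_def Let_def by simp
  have e0: "eqk k ?Y T (\<pi> \<circ> T)"
  proof (rule eqkI)
    fix y assume y: "y \<in> ?Y"
    have Ty: "T y \<in> {1..n}" using TY y by blast
    have piT: "\<pi> (T y) \<in> {1..n}" using Ty permutes_in_image[OF assms(3)] by blast
    show "((\<pi> \<circ> T) y < k) = (T y < k)"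
    proof
      assume a: "(\<pi> \<circ> T) y < k"
      then have "\<pi> (\<pi> (T y)) = \<pi> (T y)" using assms(4) piT by simp
      then have "\<pi> (T y) = T y" using permutes_inj[OF assms(3)] by (meson injD)
      then show "T y < k" using a by simp
    next
      assume "T y < k"
      then show "(\<pi> \<circ> T) y < k" using assms(4) Ty by simp
    qed
    assume "T y < k"
    then show "(\<pi> \<circ> T) y = T y" using assms(4) Ty by simp
  qed
  have E: "eqk k ?Y (FF lam T p) (FF lam (\<pi> \<circ> T) p)" using FF_eqk[OF p e0] by blast
  have "l \<in> {1..n}" using l assms(1) by simp
  then have "l \<in> FF lam T p ` ?Y" using FF_image[OF p, of T] TY by simp
  then obtain y where y: "y \<in> ?Y" "FF lam T p y = l" by (auto elim: imageE)
  have "FF lam (\<pi> \<circ> T) p y = l" using eqkD1[OF E y(1)] y l by simp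
  moreover have "FF lam (\<pi> \<circ> T) p y = \<sigma> (FF lam T p y)" using h y(1) nT by simp
  ultimately show "\<sigma> l = l" using y by simp
qed

end
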